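(* Let $N\ge 2$, $p>1$, $0<r_0<R_0\le\infty$, $\Omega=B]r_0,R_0[$, and $V\in C(\Omega)$. Let $u$ be a positive radial strictly monotone $C^2$-subsolution and $v$ a positive radial strictly monotone $C^2$-supersolution of $-\Delta_p w-V|w|^{p-2}w=0$ in $\Omega$, and assume that either $u$ is a strict subsolution or $v$ is a strict supersolution. If $(u/v)'(\rho)=0$ for some $\rho\in\,]r_0,R_0[$, then $(u/v)''(\rho)>0$. In particular, $u/v$ cannot have a local maximum in $B]r_0,R_0[$.
   Context: $\Delta_p w=\nabla\cdot(|\nabla w|^{p-2}\nabla w)$. $B]r_0,R_0[=\{x\in\mathbb{R}^N: r_0<|x|<R_0\}$, $B[r_0,R_0[=\{x: r_0\le|x|<R_0\}$. A $C^2$-subsolution (resp. supersolution) in $\Omega$ is $w\in C^2(B[r_0,R_0[)$ with $-\Delta_p w-V|w|^{p-2}w\le 0$ (resp. $\ge0$) pointwise in $\Omega$; strict means $<0$ (resp. $>0$) at every point of $\Omega$. Radial functions $w(x)=\phi(|x|)$ are identified with $\phi$ and derivatives $'$ are with respect to $r=|x|$; strictly monotone means $w'(r)>0$ for all $r\in[r_0,R_0[$ or $w'(r)<0$ for all $r\in[r_0,R_0[$. *)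

theory Defs
  imports "HOL-Analysis.Analysis"
begin

definition partial :: "'n \<Rightarrow> (real^'n \<Rightarrow> real) \<Rightarrow> real^'n \<Rightarrow> real" where
  "partial i w x = deriv (\<lambda>t. w (x + t *\<^sub>R axis i 1)) 0"

definition grad :: "(real^'n \<Rightarrow> real) \<Rightarrow> real^'n \<Rightarrow> real^'n" where
  "grad w x = (\<chi> i. partial i w x)"

definition divergence :: "(real^'n \<Rightarrow> real^'n) \<Rightarrow> real^'n \<Rightarrow> real" where
  "divergence F x = (\<Sum>i\<in>UNIV. partial i (\<lambda>y. F y $ i) x)"

definition p_laplacian :: "real \<Rightarrow> (real^'n \<Rightarrow> real) \<Rightarrow> real^'n \<Rightarrow> real" where
  "p_laplacian p w x = divergence (\<lambda>y. (norm (grad w y)) powr (p - 2) *\<^sub>R grad w y) x"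

definition rad_co :: "real \<Rightarrow> ereal \<Rightarrow> real set" where
  "rad_co r0 R0 = {r. r0 \<le> r \<and> ereal r < R0}"

definition rad_oo :: "real \<Rightarrow> ereal \<Rightarrow> real set" where
  "rad_oo r0 R0 = {r. r0 < r \<and> ereal r < R0}"

definition annulus :: "real \<Rightarrow> ereal \<Rightarrow> (real^'n) set" where
  "annulus r0 R0 = {x. r0 < norm x \<and> ereal (norm x) < R0}"

definition C2_radial :: "real set \<Rightarrow> (real \<Rightarrow> real) \<Rightarrow> (real \<Rightarrow> real) \<Rightarrow> (real \<Rightarrow> real) \<Rightarrow> bool" where
  "C2_radial S phi phi1 phi2 \<longleftrightarrow>
     (\<forall>r\<in>S. (phi has_real_derivative phi1 r) (at r within S)
           \<and> (phi1 has_real_derivative phi2 r) (at r within S))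
     \<and> continuous_on S phi2"

definition strictly_monotone_radial :: "real set \<Rightarrow> (real \<Rightarrow> real) \<Rightarrow> bool" where
  "strictly_monotone_radial S phi1 \<longleftrightarrow> (\<forall>r\<in>S. phi1 r > 0) \<or> (\<forall>r\<in>S. phi1 r < 0)"

definition op_pV :: "real \<Rightarrow> (real^'n \<Rightarrow> real) \<Rightarrow> (real^'n \<Rightarrow> real) \<Rightarrow> real^'n \<Rightarrow> real" where
  "op_pV p V w x = - p_laplacian p w x - V x * (\<bar>w x\<bar> powr (p - 2) * w x)"

definition subsolution :: "real \<Rightarrow> (real^'n \<Rightarrow> real) \<Rightarrow> (real^'n) set \<Rightarrow> (real^'n \<Rightarrow> real) \<Rightarrow> bool" where
  "subsolution p V \<Omega> w \<longleftrightarrow> (\<forall>x\<in>\<Omega>. op_pV p V w x \<le> 0)"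
definition supersolution :: "real \<Rightarrow> (real^'n \<Rightarrow> real) \<Rightarrow> (real^'n) set \<Rightarrow> (real^'n \<Rightarrow> real) \<Rightarrow> bool" where
  "supersolution p V \<Omega> w \<longleftrightarrow> (\<forall>x\<in>\<Omega>. op_pV p V w x \<ge> 0)"
definition strict_subsolution :: "real \<Rightarrow> (real^'n \<Rightarrow> real) \<Rightarrow> (real^'n) set \<Rightarrow> (real^'n \<Rightarrow> real) \<Rightarrow> bool" where
  "strict_subsolution p V \<Omega> w \<longleftrightarrow> (\<forall>x\<in>\<Omega>. op_pV p V w x < 0)"
definition strict_supersolution :: "real \<Rightarrow> (real^'n \<Rightarrow> real) \<Rightarrow> (real^'n) set \<Rightarrow> (real^'n \<Rightarrow> real) \<Rightarrow> bool" where
  "strict_supersolution p V \<Omega> w \<longleftrightarrow> (\<forall>x\<in>\<Omega>. op_pV p V w x > 0)"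

end

theory Submission
  imports Defs
begin
lemma L1:
  fixes x :: "real^'n" and \<psi> :: "real \<Rightarrow> real"
  assumes "x \<noteq> 0" "(\<psi> has_real_derivative d) (at (norm x))"
  shows "((\<lambda>t. \<psi> (norm (x + t *\<^sub>R axis i 1))) has_real_derivative d * (x $ i / norm x)) (at 0)"
proof -
  have n: "(norm has_derivative (\<lambda>h. h \<bullet> sgn x)) (at (x + 0 *\<^sub>R axis i 1))"
    using has_derivative_norm[OF assms(1)] by simp
  have l: "((\<lambda>t. x + t *\<^sub>R axis i (1::real)) has_derivative (\<lambda>h. h *\<^sub>R axis i 1)) (at 0)"
    by (auto intro!: derivative_eq_intros)
  have "((\<lambda>t. norm (x + t *\<^sub>R axis i 1)) has_derivative (\<lambda>h. (h *\<^sub>R axis i 1) \<bullet> sgn x)) (at 0)"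
    using has_derivative_compose[OF l n] by (simp add: o_def)
  hence "((\<lambda>t. norm (x + t *\<^sub>R axis i 1)) has_real_derivative (x $ i / norm x)) (at 0)"
    unfolding has_field_derivative_def
    by (rule has_derivative_eq_rhs) (auto simp: inner_axis' sgn_div_norm field_simps)
  from DERIV_chain2[OF _ this] assms(2) show ?thesis by (simp add: mult.commute)
qed

lemma radial_plap:
  fixes \<phi> \<phi>1 \<phi>2 :: "real \<Rightarrow> real" and A :: "(real^'n) set" and x :: "real^'n"
  assumes A: "open A" "\<And>x. x\<in>A \<Longrightarrow> x \<noteq> 0"
   and d1: "\<And>x. x\<in>A \<Longrightarrow> (\<phi> has_real_derivative \<phi>1 (norm x)) (at (norm x))"
   and d2: "\<And>x. x\<in>A \<Longrightarrow> (\<phi>1 has_real_derivative \<phi>2 (norm x)) (at (norm x))"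
   and sg: "\<sigma> = 1 \<or> \<sigma> = -1" and pos: "\<And>x. x\<in>A \<Longrightarrow> \<sigma> * \<phi>1 (norm x) > 0"
   and x: "x \<in> A"
  shows "p_laplacian p (\<lambda>x. \<phi> (norm x)) x = (p-1) * (\<sigma>*\<phi>1 (norm x)) powr (p-2) * \<phi>2 (norm x)
     + (real CARD('n) - 1) / norm x * ((\<sigma>*\<phi>1 (norm x)) powr (p-2) * \<phi>1 (norm x))"
proof -
  define f where "f = (\<lambda>x::real^'n. \<phi> (norm x))"
  have grad: "grad f y = (\<phi>1 (norm y)/norm y) *\<^sub>R y" if "y \<in> A" for y
    unfolding grad_def partial_def vec_eq_iff f_def
    using DERIV_imp_deriv[OF L1[OF A(2)[OF that] d1[OF that]]] by simp
  define g where "g s = (\<sigma>*\<phi>1 s) powr (p-2) * \<phi>1 s / s" for s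
  define g' where "g' s = ((p-1)*(\<sigma>*\<phi>1 s) powr (p-2) * \<phi>2 s)/s - (\<sigma>*\<phi>1 s) powr (p-2) * \<phi>1 s / s^2" for s
  have F: "(norm (grad f y) powr (p-2) *\<^sub>R grad f y) $ i = g (norm y) * y $ i" if "y \<in> A" for y i
  proof -
    have ny: "norm y > 0" using A(2)[OF that] by simp
    have "norm (grad f y) = \<bar>\<phi>1 (norm y)\<bar>" using ny by (simp add: grad that)
    also have "\<dots> = \<sigma> * \<phi>1 (norm y)" using sg pos[OF that] by auto
    finally show ?thesis by (simp add: grad that g_def)
  qed
  have gder: "(g has_real_derivative g' (norm y)) (at (norm y))" if "y \<in> A" for y
  proof -
    let ?r = "norm y"
    have ny: "?r > 0" using A(2)[OF that] by simp
    have s1: "((\<lambda>s. \<sigma> * \<phi>1 s) has_real_derivative \<sigma> * \<phi>2 ?r) (at ?r)"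
      using d2[OF that] by (auto intro!: derivative_eq_intros)
    have P: "((\<lambda>s. (\<sigma> * \<phi>1 s) powr (p-2)) has_real_derivative (p-2) * (\<sigma>*\<phi>1 ?r) powr (p-2-1) * (\<sigma>*\<phi>2 ?r)) (at ?r)"
      using DERIV_fun_powr[OF s1 pos[OF that], of "p-2"] by simp
    have D: "(g has_real_derivative (((\<sigma>*\<phi>1 ?r) powr (p-2) * \<phi>2 ?r + (p-2) * (\<sigma>*\<phi>1 ?r) powr (p-2-1) * (\<sigma>*\<phi>2 ?r) * \<phi>1 ?r) * ?r
           - (\<sigma>*\<phi>1 ?r) powr (p-2) * \<phi>1 ?r * 1) / (?r * ?r)) (at ?r)"
      unfolding g_def
      by (rule DERIV_divide[OF DERIV_mult'[OF P d2[OF that]] DERIV_ident]) (use ny in auto)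
    have e: "(\<sigma>*\<phi>1 ?r) powr (p-2-1) * (\<sigma>*\<phi>1 ?r) = (\<sigma>*\<phi>1 ?r) powr (p-2)"
    proof -
      have a: "(\<sigma>*\<phi>1 ?r) = (\<sigma>*\<phi>1 ?r) powr 1" using pos[OF that] by simp
      show ?thesis by (subst (2) a, subst powr_add[symmetric]) simp
    qed
    have "(((\<sigma>*\<phi>1 ?r) powr (p-2) * \<phi>2 ?r + (p-2) * (\<sigma>*\<phi>1 ?r) powr (p-2-1) * (\<sigma>*\<phi>2 ?r) * \<phi>1 ?r) * ?r
           - (\<sigma>*\<phi>1 ?r) powr (p-2) * \<phi>1 ?r * 1) / (?r * ?r)
         = (((p-2) * ((\<sigma>*\<phi>1 ?r) powr (p-2-1) * (\<sigma>*\<phi>1 ?r)) * \<phi>2 ?r + (\<sigma>*\<phi>1 ?r) powr (p-2) * \<phi>2 ?r) * ?r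
           - (\<sigma>*\<phi>1 ?r) powr (p-2) * \<phi>1 ?r) / (?r * ?r)"
      by (simp add: algebra_simps)
    also have "\<dots> = g' ?r" unfolding e g'_def using ny
      by (simp add: field_simps power2_eq_square)
    finally show ?thesis using D by simp
  qed
  have part: "partial i (\<lambda>y. (norm (grad f y) powr (p-2) *\<^sub>R grad f y) $ i) x = g' (norm x) * (x $ i / norm x) * x $ i + g (norm x)" for i
  proof -
    define T where "T = (\<lambda>t::real. x + t *\<^sub>R axis i 1) -` A"
    have T: "open T" "0 \<in> T" unfolding T_def using x A(1)
      by (auto intro!: continuous_open_vimage continuous_intros)
    have D0: "((\<lambda>t. g (norm (x + t *\<^sub>R axis i 1)) * (x $ i + t)) has_real_derivative
          g' (norm x) * (x $ i / norm x) * (x $ i + 0) + 1 * g (norm (x + 0 *\<^sub>R axis i 1))) (at 0)"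
      by (rule DERIV_mult[OF L1[OF A(2)[OF x] gder[OF x]]]) (auto intro!: derivative_eq_intros)
    have "((\<lambda>t. (norm (grad f (x + t *\<^sub>R axis i 1)) powr (p-2) *\<^sub>R grad f (x + t *\<^sub>R axis i 1)) $ i)
            has_real_derivative g' (norm x) * (x $ i / norm x) * x $ i + g (norm x)) (at 0)"
    proof (rule has_field_derivative_transform_within_open[OF _ T])
      fix t assume "t \<in> T"
      hence "x + t *\<^sub>R axis i 1 \<in> A" by (simp add: T_def)
      from F[OF this, of i] show "g (norm (x + t *\<^sub>R axis i 1)) * (x $ i + t) =
        (norm (grad f (x + t *\<^sub>R axis i 1)) powr (p-2) *\<^sub>R grad f (x + t *\<^sub>R axis i 1)) $ i"
        by (simp add: axis_def)
    qed (use D0 in simp)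
    thus ?thesis unfolding partial_def by (rule DERIV_imp_deriv)
  qed
  have nx: "norm x > 0" using A(2)[OF x] by simp
  have sq: "(\<Sum>i\<in>UNIV. x $ i * x $ i) = norm x ^ 2"
    by (simp add: power2_norm_eq_inner inner_vec_def)
  have "p_laplacian p f x = (\<Sum>i\<in>UNIV. g' (norm x) / norm x * (x $ i * x $ i) + g (norm x))"
    unfolding p_laplacian_def divergence_def part by (simp add: field_simps)
  also have "\<dots> = g' (norm x) / norm x * norm x ^ 2 + real CARD('n) * g (norm x)"
    unfolding sum.distrib sum_distrib_left[symmetric] sq by simp
  also have "\<dots> = (p-1) * (\<sigma>*\<phi>1 (norm x)) powr (p-2) * \<phi>2 (norm x)
     + (real CARD('n) - 1) / norm x * ((\<sigma>*\<phi>1 (norm x)) powr (p-2) * \<phi>1 (norm x))"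
    unfolding g'_def g_def using nx by (simp add: field_simps power2_eq_square)
  finally show ?thesis unfolding f_def .
qed

lemma open_rad_oo: "open (rad_oo r0 R0)"
proof (cases R0)
  case (real R) thus ?thesis unfolding rad_oo_def by (simp add: open_Collect_less open_Collect_conj)
next
  case PInf thus ?thesis unfolding rad_oo_def by (simp add: open_Collect_less)
next
  case MInf thus ?thesis unfolding rad_oo_def by simp
qed

lemma open_annulus: "open (annulus r0 R0 :: (real^'n) set)"
proof (cases R0)
  case (real R) thus ?thesis unfolding annulus_def
    by (simp add: open_Collect_less open_Collect_conj continuous_on_norm_id)
next
  case PInf thus ?thesis unfolding annulus_def by (simp add: open_Collect_less continuous_on_norm_id)
next
  case MInf thus ?thesis unfolding annulus_def by simp
qed

lemma rad_oo_interior: "r \<in> rad_oo r0 R0 \<Longrightarrow> r \<in> interior (rad_co r0 R0)"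
proof -
  assume r: "r \<in> rad_oo r0 R0"
  have "rad_oo r0 R0 \<subseteq> rad_co r0 R0" unfolding rad_oo_def rad_co_def by auto
  from interior_maximal[OF this open_rad_oo] r show ?thesis by auto
qed

lemma C2_at:
  assumes "C2_radial (rad_co r0 R0) u u1 u2" "r \<in> rad_oo r0 R0"
  shows "(u has_real_derivative u1 r) (at r)" "(u1 has_real_derivative u2 r) (at r)"
proof -
  have i: "at r within rad_co r0 R0 = at r" using at_within_interior[OF rad_oo_interior[OF assms(2)]] .
  have "r \<in> rad_co r0 R0" using assms(2) unfolding rad_oo_def rad_co_def by auto
  thus "(u has_real_derivative u1 r) (at r)" "(u1 has_real_derivative u2 r) (at r)"
    using assms(1) i unfolding C2_radial_def by auto
qed

lemma annulus_norm: "x \<in> annulus r0 R0 \<longleftrightarrow> norm x \<in> rad_oo r0 R0"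
  unfolding annulus_def rad_oo_def by simp

lemma op_radial:
  fixes u u1 u2 :: "real \<Rightarrow> real" and V :: "real^'n \<Rightarrow> real"
  assumes r0: "0 < r0" and uC2: "C2_radial (rad_co r0 R0) u u1 u2"
    and upos: "\<forall>r\<in>rad_co r0 R0. u r > 0"
    and umon: "strictly_monotone_radial (rad_co r0 R0) u1"
  obtains \<sigma> where "\<sigma> = 1 \<or> \<sigma> = -1" "\<forall>r\<in>rad_co r0 R0. \<sigma> * u1 r > 0"
    "\<And>x. x \<in> annulus r0 R0 \<Longrightarrow> op_pV p V (\<lambda>x. u (norm x)) x =
       - ((p-1) * (\<sigma>*u1 (norm x)) powr (p-2) * u2 (norm x)
     + (real CARD('n) - 1) / norm x * ((\<sigma>*u1 (norm x)) powr (p-2) * u1 (norm x)))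
       - V x * (u (norm x) powr (p-2) * u (norm x))"
proof -
  obtain \<sigma> where sg: "\<sigma> = 1 \<or> \<sigma> = -1" and pos: "\<forall>r\<in>rad_co r0 R0. \<sigma> * u1 r > 0"
    using umon unfolding strictly_monotone_radial_def
    by (metis mult_minus_left mult_1 neg_0_less_iff_less)
  have sub: "rad_oo r0 R0 \<subseteq> rad_co r0 R0" unfolding rad_oo_def rad_co_def by auto
  have A: "x \<noteq> 0" if "x \<in> annulus r0 R0" for x :: "real^'n"
    using that r0 unfolding annulus_def by auto
  show ?thesis
  proof (rule that[OF sg pos])
    fix x :: "real^'n" assume x: "x \<in> annulus r0 R0"
    have "p_laplacian p (\<lambda>x. u (norm x)) x = (p-1) * (\<sigma>*u1 (norm x)) powr (p-2) * u2 (norm x)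
     + (real CARD('n) - 1) / norm x * ((\<sigma>*u1 (norm x)) powr (p-2) * u1 (norm x))"
    proof (rule radial_plap[OF open_annulus A _ _ sg _ x])
      fix y :: "real^'n" assume y: "y \<in> annulus r0 R0"
      hence yS: "norm y \<in> rad_oo r0 R0" by (simp add: annulus_norm)
      show "(u has_real_derivative u1 (norm y)) (at (norm y))" using C2_at[OF uC2 yS] by simp
      show "(u1 has_real_derivative u2 (norm y)) (at (norm y))" using C2_at[OF uC2 yS] by simp
      show "0 < \<sigma> * u1 (norm y)" using pos sub yS by blast
    qed
    moreover have "\<bar>u (norm x)\<bar> = u (norm x)" using upos x sub annulus_norm
      by (metis abs_of_pos subsetD)
    ultimately show "op_pV p V (\<lambda>x. u (norm x)) x = - ((p-1) * (\<sigma>*u1 (norm x)) powr (p-2) * u2 (norm x)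
     + (real CARD('n) - 1) / norm x * ((\<sigma>*u1 (norm x)) powr (p-2) * u1 (norm x)))
       - V x * (u (norm x) powr (p-2) * u (norm x))" unfolding op_pV_def by simp
  qed
qed

lemma key_alg:
  fixes p N \<rho> a su sv K U W Vx u u2 v v2 opu opv :: real
  assumes p1: "p > 1" and K: "K > 0" and U: "U > 0" and W: "W > 0" and u: "u > 0" and v: "v > 0"
    and ou: "opu = - ((p-1) * (K*U) * u2 + (N - 1) / \<rho> * ((K*U) * (a*u))) - Vx * (U * u)"
    and ov: "opv = - ((p-1) * (K*W) * v2 + (N - 1) / \<rho> * ((K*W) * (a * v))) - Vx * (W * v)"
    and su: "opu \<le> 0" and sv: "opv \<ge> 0" and st: "opu < 0 \<or> opv > 0"
  shows "u2 * v - u * v2 > 0"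
proof -
  define Eu where "Eu = -((p-1)*K*u2/u + (N-1)/\<rho>*K*a) - Vx"
  define Ev where "Ev = -((p-1)*K* v2/v + (N-1)/\<rho>*K*a) - Vx"
  have eu: "opu = (U*u) * Eu" unfolding ou Eu_def using u by (simp add: field_simps)
  have ev: "opv = (W* v) * Ev" unfolding ov Ev_def using v by (simp add: field_simps)
  have Uu: "U*u > 0" "W * v > 0" "\<not> U*u \<le> 0" "\<not> W * v \<le> 0" "\<not> U*u < 0" "\<not> W * v < 0" using mult_pos_pos[OF U u] mult_pos_pos[OF W v] by auto
  have "Eu \<le> 0" using su eu Uu by (auto simp: mult_le_0_iff)
  moreover have "Ev \<ge> 0" using sv ev Uu by (auto simp: zero_le_mult_iff)
  moreover have "Eu < 0 \<or> Ev > 0" using st eu ev Uu by (auto simp: mult_less_0_iff zero_less_mult_iff)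
  ultimately have "Ev - Eu > 0" by linarith
  moreover have "Ev - Eu = (p-1)*K*(u2/u - v2/v)" unfolding Eu_def Ev_def using u v by (simp add: field_simps)
  ultimately have "(p-1)*K*(u2/u - v2/v) > 0" by simp
  moreover have "(p-1)*K > 0" using p1 K by simp
  ultimately have "u2/u - v2/v > 0" using zero_less_mult_pos by blast
  hence "(u* v) * (u2/u - v2/v) > 0" using u v by simp
  moreover have "(u* v) * (u2/u - v2/v) = u2 * v - u * v2" using u v by (simp add: field_simps)
  ultimately show ?thesis by simp
qed
theorem lemma3p3:
  fixes V :: "real^'n \<Rightarrow> real"
    and p r0 :: real and R0 :: ereal
    and u u1 u2 v v1 v2 :: "real \<Rightarrow> real"
  assumes N2: "CARD('n) \<ge> 2"
    and p1: "p > 1"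
    and r0: "0 < r0" "ereal r0 < R0"
    and V: "continuous_on (annulus r0 R0) V"
    and uC2: "C2_radial (rad_co r0 R0) u u1 u2"
    and vC2: "C2_radial (rad_co r0 R0) v v1 v2"
    and upos: "\<forall>r\<in>rad_co r0 R0. u r > 0"
    and vpos: "\<forall>r\<in>rad_co r0 R0. v r > 0"
    and umon: "strictly_monotone_radial (rad_co r0 R0) u1"
    and vmon: "strictly_monotone_radial (rad_co r0 R0) v1"
    and usub: "subsolution p V (annulus r0 R0) (\<lambda>x. u (norm x))"
    and vsup: "supersolution p V (annulus r0 R0) (\<lambda>x. v (norm x))"
    and strict: "strict_subsolution p V (annulus r0 R0) (\<lambda>x. u (norm x))
                 \<or> strict_supersolution p V (annulus r0 R0) (\<lambda>x. v (norm x))"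
  shows "(\<forall>\<rho>\<in>rad_oo r0 R0. deriv (\<lambda>r. u r / v r) \<rho> = 0
            \<longrightarrow> deriv (deriv (\<lambda>r. u r / v r)) \<rho> > 0)
         \<and> \<not> (\<exists>\<rho>\<in>rad_oo r0 R0. \<forall>\<^sub>F r in at \<rho>. u r / v r \<le> u \<rho> / v \<rho>)"
proof -
  let ?S = "rad_oo r0 R0"
  define w where "w r = u r / v r" for r
  have sub: "?S \<subseteq> rad_co r0 R0" unfolding rad_oo_def rad_co_def by auto
  obtain su where su: "su = 1 \<or> su = -1" "\<forall>r\<in>rad_co r0 R0. su * u1 r > 0"
    and opu: "\<And>x. x \<in> annulus r0 R0 \<Longrightarrow> op_pV p V (\<lambda>x. u (norm x)) x =
       - ((p-1) * (su*u1 (norm x)) powr (p-2) * u2 (norm x)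
     + (real CARD('n) - 1) / norm x * ((su*u1 (norm x)) powr (p-2) * u1 (norm x)))
       - V x * (u (norm x) powr (p-2) * u (norm x))"
    using op_radial[OF r0(1) uC2 upos umon] by metis
  obtain sv where sv: "sv = 1 \<or> sv = -1" "\<forall>r\<in>rad_co r0 R0. sv * v1 r > 0"
    and opv: "\<And>x. x \<in> annulus r0 R0 \<Longrightarrow> op_pV p V (\<lambda>x. v (norm x)) x =
       - ((p-1) * (sv * v1 (norm x)) powr (p-2) * v2 (norm x)
     + (real CARD('n) - 1) / norm x * ((sv * v1 (norm x)) powr (p-2) * v1 (norm x)))
       - V x * (v (norm x) powr (p-2) * v (norm x))"
    using op_radial[OF r0(1) vC2 vpos vmon] by metis
  have key: "u2 \<rho> * v \<rho> - u \<rho> * v2 \<rho> > 0" if \<rho>: "\<rho> \<in> ?S" and eq: "u1 \<rho> * v \<rho> = u \<rho> * v1 \<rho>" for \<rho>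
  proof -
    define x :: "real^'n" where "x = \<rho> *\<^sub>R axis undefined 1"
    have nx: "norm x = \<rho>" using \<rho> r0 unfolding x_def rad_oo_def by simp
    have xA: "x \<in> annulus r0 R0" using \<rho> nx by (simp add: annulus_norm)
    have \<rho>co: "\<rho> \<in> rad_co r0 R0" using \<rho> sub by blast
    have up: "u \<rho> > 0" and vp: "v \<rho> > 0" using upos vpos \<rho>co by auto
    define a where "a = u1 \<rho> / u \<rho>"
    have ua: "u1 \<rho> = a * u \<rho>" using up unfolding a_def by simp
    have va: "v1 \<rho> = a * v \<rho>" using eq up vp unfolding a_def by (simp add: field_simps)
    have sa: "su * a > 0" using su(2) \<rho>co ua up by (metis mult.assoc zero_less_mult_pos2)
    have sva: "sv * a > 0" using sv(2) \<rho>co va vp by (metis mult.assoc zero_less_mult_pos2)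
    have ss: "sv = su" using su(1) sv(1) sa sva by auto
    define K where "K = (su * a) powr (p-2)"
    have K: "K > 0" using sa unfolding K_def by (auto simp: powr_gt_zero)
    have pu: "(su*u1 \<rho>) powr (p-2) = K * u \<rho> powr (p-2)"
      unfolding K_def ua using sa up by (simp add: powr_mult[symmetric] mult.assoc)
    have pv: "(sv * v1 \<rho>) powr (p-2) = K * v \<rho> powr (p-2)"
      unfolding K_def va ss using sa vp by (simp add: powr_mult[symmetric] mult.assoc)
    show ?thesis
    proof (rule key_alg[OF p1 K _ _ up vp])
      show "op_pV p V (\<lambda>x. u (norm x)) x = - ((p-1) * (K * u \<rho> powr (p-2)) * u2 \<rho>
        + (real CARD('n) - 1) / \<rho> * ((K * u \<rho> powr (p-2)) * (a * u \<rho>))) - V x * (u \<rho> powr (p-2) * u \<rho>)"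
        using opu[OF xA] unfolding nx pu ua[symmetric] .
      show "op_pV p V (\<lambda>x. v (norm x)) x = - ((p-1) * (K * v \<rho> powr (p-2)) * v2 \<rho>
        + (real CARD('n) - 1) / \<rho> * ((K * v \<rho> powr (p-2)) * (a * v \<rho>))) - V x * (v \<rho> powr (p-2) * v \<rho>)"
        using opv[OF xA] unfolding nx pv va[symmetric] .
      show "op_pV p V (\<lambda>x. u (norm x)) x \<le> 0" using usub xA unfolding subsolution_def by blast
      show "op_pV p V (\<lambda>x. v (norm x)) x \<ge> 0" using vsup xA unfolding supersolution_def by blast
      show "op_pV p V (\<lambda>x. u (norm x)) x < 0 \<or> op_pV p V (\<lambda>x. v (norm x)) x > 0"
        using strict xA unfolding strict_subsolution_def strict_supersolution_def by blast
    qed (use up vp in auto)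
  qed
  have vne: "v r \<noteq> 0" if "r \<in> ?S" for r using vpos sub that by force
  have wder: "(w has_real_derivative (u1 r * v r - u r * v1 r) / (v r * v r)) (at r)" if r: "r \<in> ?S" for r
    unfolding w_def using DERIV_divide[OF C2_at(1)[OF uC2 r] C2_at(1)[OF vC2 r] vne[OF r]] by simp
  have dw: "deriv w r = (u1 r * v r - u r * v1 r) / (v r * v r)" if r: "r \<in> ?S" for r
    using DERIV_imp_deriv[OF wder[OF r]] .
  have ddw: "(deriv w has_real_derivative (u2 \<rho> * v \<rho> - u \<rho> * v2 \<rho>) / (v \<rho> * v \<rho>)) (at \<rho>)"
    if \<rho>: "\<rho> \<in> ?S" and eq: "u1 \<rho> * v \<rho> = u \<rho> * v1 \<rho>" for \<rho>
  proof -
    have D: "((\<lambda>r. (u1 r * v r - u r * v1 r) / (v r * v r)) has_real_derivative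
      ((u1 \<rho> * v1 \<rho> + u2 \<rho> * v \<rho> - (u \<rho> * v2 \<rho> + u1 \<rho> * v1 \<rho>)) * (v \<rho> * v \<rho>)
        - (u1 \<rho> * v \<rho> - u \<rho> * v1 \<rho>) * (v \<rho> * v1 \<rho> + v1 \<rho> * v \<rho>)) / ((v \<rho> * v \<rho>) * (v \<rho> * v \<rho>))) (at \<rho>)"
      by (rule DERIV_divide[OF DERIV_diff[OF DERIV_mult'[OF C2_at(2)[OF uC2 \<rho>] C2_at(1)[OF vC2 \<rho>]]
            DERIV_mult'[OF C2_at(1)[OF uC2 \<rho>] C2_at(2)[OF vC2 \<rho>]]]
            DERIV_mult'[OF C2_at(1)[OF vC2 \<rho>] C2_at(1)[OF vC2 \<rho>]]])
         (use vne[OF \<rho>] in simp)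
    have "((\<lambda>r. (u1 r * v r - u r * v1 r) / (v r * v r)) has_real_derivative
       (u2 \<rho> * v \<rho> - u \<rho> * v2 \<rho>) / (v \<rho> * v \<rho>)) (at \<rho>)"
    proof -
      have z: "u1 \<rho> * v \<rho> - u \<rho> * v1 \<rho> = 0" using eq by simp
      have "((u1 \<rho> * v1 \<rho> + u2 \<rho> * v \<rho> - (u \<rho> * v2 \<rho> + u1 \<rho> * v1 \<rho>)) * (v \<rho> * v \<rho>)
        - (u1 \<rho> * v \<rho> - u \<rho> * v1 \<rho>) * (v \<rho> * v1 \<rho> + v1 \<rho> * v \<rho>)) / ((v \<rho> * v \<rho>) * (v \<rho> * v \<rho>))
        = ((u2 \<rho> * v \<rho> - u \<rho> * v2 \<rho>) * (v \<rho> * v \<rho>)) / ((v \<rho> * v \<rho>) * (v \<rho> * v \<rho>))"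
        unfolding z by (simp add: algebra_simps)
      also have "\<dots> = (u2 \<rho> * v \<rho> - u \<rho> * v2 \<rho>) / (v \<rho> * v \<rho>)" using vne[OF \<rho>] by simp
      finally show ?thesis using D by simp
    qed
    thus ?thesis
      by (rule has_field_derivative_transform_within_open[OF _ open_rad_oo \<rho>]) (simp add: dw)
  qed
  have first: "deriv (deriv w) \<rho> > 0" if \<rho>: "\<rho> \<in> ?S" and d0: "deriv w \<rho> = 0" for \<rho>
  proof -
    have eq: "u1 \<rho> * v \<rho> = u \<rho> * v1 \<rho>" using d0 dw[OF \<rho>] vne[OF \<rho>] by simp
    have "deriv (deriv w) \<rho> = (u2 \<rho> * v \<rho> - u \<rho> * v2 \<rho>) / (v \<rho> * v \<rho>)"
      by (rule DERIV_imp_deriv[OF ddw[OF \<rho> eq]])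
    moreover have "v \<rho> * v \<rho> > 0" using vne[OF \<rho>] by (simp add: zero_less_mult_iff linorder_neq_iff disj_commute)
    ultimately show ?thesis using key[OF \<rho> eq] by simp
  qed
  have second: False if \<rho>: "\<rho> \<in> ?S" and mx: "\<forall>\<^sub>F r in at \<rho>. w r \<le> w \<rho>" for \<rho>
  proof -
    obtain d where d: "d > 0" "\<And>y. y \<noteq> \<rho> \<Longrightarrow> dist y \<rho> < d \<Longrightarrow> w y \<le> w \<rho>"
      using mx unfolding eventually_at by blast
    obtain e where e: "e > 0" "ball \<rho> e \<subseteq> ?S" using open_rad_oo \<rho> open_contains_ball by blast
    have "\<forall>y. \<bar>\<rho> - y\<bar> < d \<longrightarrow> w y \<le> w \<rho>" using d by (metis dist_real_def dist_commute order_refl)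
    hence d0: "deriv w \<rho> = 0"
      using DERIV_local_max[OF wder[OF \<rho>] d(1)] dw[OF \<rho>] by simp
    have eq: "u1 \<rho> * v \<rho> = u \<rho> * v1 \<rho>" using d0 dw[OF \<rho>] vne[OF \<rho>] by simp
    have "deriv (deriv w) \<rho> > 0" using first[OF \<rho> d0] .
    have "(u2 \<rho> * v \<rho> - u \<rho> * v2 \<rho>) / (v \<rho> * v \<rho>) > 0"
      using first[OF \<rho> d0] DERIV_imp_deriv[OF ddw[OF \<rho> eq]] by simp
    from DERIV_pos_inc_right[OF ddw[OF \<rho> eq] this] obtain d' where
      d': "d' > 0" "\<And>h. h > 0 \<Longrightarrow> h < d' \<Longrightarrow> deriv w \<rho> < deriv w (\<rho> + h)" by blast
    define h where "h = min d' (min d e) / 2"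
    have h: "h > 0" "h < d'" "h < d" "h < e" using d' d e unfolding h_def by auto
    have mv: "(w has_real_derivative deriv w t) (at t)" if "\<rho> \<le> t" "t \<le> \<rho> + h" for t
    proof -
      have "t \<in> ?S" using e h that by (auto simp: dist_real_def subset_iff)
      thus "(w has_real_derivative deriv w t) (at t)" using wder dw by simp
    qed
    from MVT2[of \<rho> "\<rho> + h", OF _ mv] h obtain z where z: "z > \<rho>" "z < \<rho> + h" "w (\<rho> + h) - w \<rho> = h * deriv w z"
      by auto
    have "deriv w z > 0" using d'(2)[of "z - \<rho>"] z h d0 by simp
    hence "w (\<rho> + h) > w \<rho>" using z mult_pos_pos[OF h(1)] by (metis diff_gt_0_iff_gt)
    moreover have "w (\<rho> + h) \<le> w \<rho>" using d(2)[of "\<rho> + h"] h by (simp add: dist_real_def)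
    ultimately show False by simp
  qed
  show ?thesis
    using first second unfolding w_def[abs_def] by blast
qed
end
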